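(* Let $\mathbb F$ be a field of characteristic $p$, $S=\{R_0,\dots,R_d\}$ a $p'$-valenced scheme on $X$, $x\in X$, $\mathcal T=\mathcal T(x)$, $E_a^*=E_a^*(x)$, and let $M$ lie in the Jacobson radical of $\mathcal T$. Then (i) there is no $R_a\in S$ with $k_a=1$ and $E_a^*M\neq O$; and (ii) there is no $R_a\in S$ with $k_a=1$ and $ME_a^*\neq O$.
   Context: Let $X$ be a nonempty finite set. A scheme of class $d$ on $X$ is a partition $S=\{R_0,\dots,R_d\}$ of $X\times X$ into nonempty sets such that $R_0=\{(b,b):b\in X\}$; for each $c$ there is $c'$ with $R_{c'}=\{(f,e):(e,f)\in R_c\}$; and for all $i,j,k$ the intersection number $p_{ij}^k=|\{\ell\in X:(m,\ell)\in R_i,(\ell,n)\in R_j\}|$ does not depend on $(m,n)\in R_k$. The valency is $k_a=p_{aa'}^0$. $S$ is $p'$-valenced if no valency $k_a$ is divisible by $p$ (every scheme is $0'$-valenced). For $y\in X$, $yR_a=\{z:(y,z)\in R_a\}$; $A_a\in M_X(\mathbb F)$ is the $(0,1)$ adjacency matrix of $R_a$, $E_a^*(y)$ is the diagonal $(0,1)$-matrix with ones exactly at positions indexed by $yR_a$, $O$ is the zero matrix, and $\mathcal T(y)$ is the $\mathbb F$-subalgebra of $M_X(\mathbb F)$ generated by $A_0,\dots,A_d,E_0^*(y),\dots,E_d^*(y)$. *)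

theory Defs
  imports "HOL-Analysis.Analysis"
begin

definition is_scheme :: "(nat \<Rightarrow> ('x::finite \<times> 'x) set) \<Rightarrow> nat \<Rightarrow> bool" where
  "is_scheme R d \<longleftrightarrow>
     (\<forall>i\<le>d. R i \<noteq> {}) \<and>
     (\<forall>i\<le>d. \<forall>j\<le>d. i \<noteq> j \<longrightarrow> R i \<inter> R j = {}) \<and>
     (\<Union>i\<in>{0..d}. R i) = UNIV \<and>
     R 0 = {(b, b) | b. True} \<and>
     (\<forall>c\<le>d. \<exists>c'\<le>d. R c' = {(f, e). (e, f) \<in> R c}) \<and>
     (\<forall>i\<le>d. \<forall>j\<le>d. \<forall>k\<le>d. \<forall>m n m' n'. (m, n) \<in> R k \<longrightarrow> (m', n') \<in> R k \<longrightarrow>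
        card {l. (m, l) \<in> R i \<and> (l, n) \<in> R j} = card {l. (m', l) \<in> R i \<and> (l, n') \<in> R j})"

definition intersection_number :: "(nat \<Rightarrow> ('x::finite \<times> 'x) set) \<Rightarrow> nat \<Rightarrow> nat \<Rightarrow> nat \<Rightarrow> nat" where
  "intersection_number R i j k =
     (let (m, n) = (SOME mn. mn \<in> R k) in card {l. (m, l) \<in> R i \<and> (l, n) \<in> R j})"

definition transpose_index :: "(nat \<Rightarrow> ('x::finite \<times> 'x) set) \<Rightarrow> nat \<Rightarrow> nat \<Rightarrow> nat" where
  "transpose_index R d c = (SOME c'. c' \<le> d \<and> R c' = {(f, e). (e, f) \<in> R c})"

definition valency :: "(nat \<Rightarrow> ('x::finite \<times> 'x) set) \<Rightarrow> nat \<Rightarrow> nat \<Rightarrow> nat" where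
  "valency R d a = intersection_number R a (transpose_index R d a) 0"

definition p'_valenced :: "nat \<Rightarrow> (nat \<Rightarrow> ('x::finite \<times> 'x) set) \<Rightarrow> nat \<Rightarrow> bool" where
  "p'_valenced p R d \<longleftrightarrow> (\<forall>a\<le>d. \<not> p dvd valency R d a)"

definition adj_matrix :: "(nat \<Rightarrow> ('x::finite \<times> 'x) set) \<Rightarrow> nat \<Rightarrow> 'f::field^'x^'x" where
  "adj_matrix R a = (\<chi> i j. if (i, j) \<in> R a then 1 else 0)"

definition dual_idempotent :: "(nat \<Rightarrow> ('x::finite \<times> 'x) set) \<Rightarrow> 'x \<Rightarrow> nat \<Rightarrow> 'f::field^'x^'x" where
  "dual_idempotent R y a = (\<chi> i j. if i = j \<and> (y, i) \<in> R a then 1 else 0)"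

definition mat_smult :: "'f::field \<Rightarrow> 'f^'x^'x \<Rightarrow> 'f^'x^'x" where
  "mat_smult c A = (\<chi> i j. c * A $ i $ j)"

inductive_set terwilliger_alg :: "(nat \<Rightarrow> ('x::finite \<times> 'x) set) \<Rightarrow> nat \<Rightarrow> 'x \<Rightarrow> ('f::field^'x^'x) set"
  for R d y where
  gen_A: "a \<le> d \<Longrightarrow> adj_matrix R a \<in> terwilliger_alg R d y"
| gen_E: "a \<le> d \<Longrightarrow> dual_idempotent R y a \<in> terwilliger_alg R d y"
| one: "mat 1 \<in> terwilliger_alg R d y"
| zero: "0 \<in> terwilliger_alg R d y"
| add: "A \<in> terwilliger_alg R d y \<Longrightarrow> B \<in> terwilliger_alg R d y \<Longrightarrow> A + B \<in> terwilliger_alg R d y"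
| smult: "A \<in> terwilliger_alg R d y \<Longrightarrow> mat_smult c A \<in> terwilliger_alg R d y"
| mult: "A \<in> terwilliger_alg R d y \<Longrightarrow> B \<in> terwilliger_alg R d y \<Longrightarrow> A ** B \<in> terwilliger_alg R d y"

definition left_ideal :: "('f::field^'x::finite^'x) set \<Rightarrow> ('f^'x^'x) set \<Rightarrow> bool" where
  "left_ideal T L \<longleftrightarrow> L \<subseteq> T \<and> 0 \<in> L \<and> (\<forall>A\<in>L. \<forall>B\<in>L. A - B \<in> L) \<and>
     (\<forall>t\<in>T. \<forall>A\<in>L. t ** A \<in> L)"

definition maximal_left_ideal :: "('f::field^'x::finite^'x) set \<Rightarrow> ('f^'x^'x) set \<Rightarrow> bool" where
  "maximal_left_ideal T L \<longleftrightarrow> left_ideal T L \<and> L \<noteq> T \<and>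
     (\<forall>L'. left_ideal T L' \<longrightarrow> L \<subseteq> L' \<longrightarrow> L' = L \<or> L' = T)"

definition jacobson_radical :: "('f::field^'x::finite^'x) set \<Rightarrow> ('f^'x^'x) set" where
  "jacobson_radical T = {M \<in> T. \<forall>L. maximal_left_ideal T L \<longrightarrow> M \<in> L}"

end

theory Submission
  imports Defs
begin

lemma mat_smult_alt: "mat_smult c A = (mat c :: 'f::field^'x::finite^'x) ** A"
  by (simp add: mat_smult_def matrix_matrix_mult_def mat_def vec_eq_iff if_distrib if_distribR sum.delta cong: if_cong)

lemma mat_diff_rdistrib: "((a::'f::field^'x::finite^'x) - b) ** X = a ** X - b ** X"
  by (simp add: matrix_matrix_mult_def vec_eq_iff left_diff_distrib sum_subtractf)

lemma T_neg: "A \<in> terwilliger_alg R d y \<Longrightarrow> - A \<in> terwilliger_alg R d y"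
proof -
  assume "A \<in> terwilliger_alg R d y"
  then have "mat_smult (-1) A \<in> terwilliger_alg R d y" by (rule terwilliger_alg.smult)
  moreover have "mat_smult (-1) A = - A" by (simp add: mat_smult_def vec_eq_iff)
  ultimately show ?thesis by simp
qed

lemma T_diff: "A \<in> terwilliger_alg R d y \<Longrightarrow> B \<in> terwilliger_alg R d y \<Longrightarrow> A - B \<in> terwilliger_alg R d y"
  using terwilliger_alg.add[OF _ T_neg] by (metis diff_conv_add_uminus)

lemma jac_inv:
  fixes M t :: "'f::field^'x::finite^'x"
  assumes M: "M \<in> jacobson_radical (terwilliger_alg R d y)" and t: "t \<in> terwilliger_alg R d y"
  shows "\<exists>s\<in>terwilliger_alg R d y. s ** (mat 1 - t ** M) = mat 1"
proof (rule ccontr)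
  assume nex: "\<not> ?thesis"
  let ?T = "terwilliger_alg R d y"
  have MT: "M \<in> ?T" using M by (simp add: jacobson_radical_def)
  define X where "X = mat 1 - t ** M"
  have XT: "X \<in> ?T" unfolding X_def by (intro T_diff terwilliger_alg.one terwilliger_alg.mult t MT)
  define L where "L = {s ** X | s. s \<in> ?T}"
  have LI: "left_ideal ?T L"
    unfolding left_ideal_def
  proof (intro conjI ballI)
    show "L \<subseteq> ?T" unfolding L_def using XT terwilliger_alg.mult by blast
    show "0 \<in> L" unfolding L_def using terwilliger_alg.zero by force
    fix A B assume "A \<in> L" "B \<in> L"
    then obtain a b where "a \<in> ?T" "b \<in> ?T" "A = a ** X" "B = b ** X" unfolding L_def by blast
    then show "A - B \<in> L" unfolding L_def
      by (auto intro!: exI[of _ "a - b"] T_diff simp: mat_diff_rdistrib)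
  next
    fix u A :: "'f^'x^'x" assume "u \<in> ?T" "A \<in> L"
    then obtain a where "a \<in> ?T" "A = a ** X" unfolding L_def by blast
    then show "u ** A \<in> L" unfolding L_def using \<open>u \<in> ?T\<close>
      by (auto intro!: exI[of _ "u ** a"] terwilliger_alg.mult simp: matrix_mul_assoc)
  qed
  have n1: "mat 1 \<notin> L" using nex unfolding L_def X_def by auto
  define Afam where "Afam = {L'. left_ideal ?T L' \<and> L \<subseteq> L' \<and> mat 1 \<notin> L'}"
  have "\<exists>K\<in>Afam. \<forall>Z\<in>Afam. K \<subseteq> Z \<longrightarrow> Z = K"
  proof (rule subset_Zorn_nonempty)
    show "Afam \<noteq> {}" using LI n1 unfolding Afam_def by blast
    fix C assume Cne: "C \<noteq> {}" and ch: "subset.chain Afam C"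
    have CA: "C \<subseteq> Afam" and tot: "\<forall>X\<in>C. \<forall>Y\<in>C. X \<subseteq> Y \<or> Y \<subseteq> X"
      using ch by (auto simp: subset_chain_def)
    have "left_ideal ?T (\<Union>C)"
      unfolding left_ideal_def
    proof (intro conjI ballI)
      show "\<Union>C \<subseteq> ?T" using CA by (auto simp: Afam_def left_ideal_def)
      show "0 \<in> \<Union>C" using CA Cne by (auto simp: Afam_def left_ideal_def)
      fix A B assume "A \<in> \<Union>C" "B \<in> \<Union>C"
      then obtain P Q where PQ: "P \<in> C" "Q \<in> C" "A \<in> P" "B \<in> Q" by blast
      show "A - B \<in> \<Union>C"
      proof (cases "P \<subseteq> Q")
        case True
        have "left_ideal ?T Q" using PQ CA by (auto simp: Afam_def)
        then have "A - B \<in> Q" using PQ True unfolding left_ideal_def by blast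
        then show ?thesis using PQ by blast
      next
        case False
        then have "Q \<subseteq> P" using tot PQ by blast
        have "left_ideal ?T P" using PQ CA by (auto simp: Afam_def)
        then have "A - B \<in> P" using PQ \<open>Q \<subseteq> P\<close> unfolding left_ideal_def by blast
        then show ?thesis using PQ by blast
      qed
    next
      fix u A :: "'f^'x^'x" assume "u \<in> ?T" "A \<in> \<Union>C"
      then obtain P where P: "P \<in> C" "A \<in> P" by blast
      have "left_ideal ?T P" using P CA by (auto simp: Afam_def)
      then have "u ** A \<in> P" using P \<open>u \<in> ?T\<close> unfolding left_ideal_def by blast
      then show "u ** A \<in> \<Union>C" using P by blast
    qed
    then show "\<Union>C \<in> Afam" using CA Cne by (auto simp: Afam_def)
  qed
  then obtain K where K: "K \<in> Afam" and Kmax: "\<forall>Z\<in>Afam. K \<subseteq> Z \<longrightarrow> Z = K" by blast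
  have KI: "left_ideal ?T K" and LK: "L \<subseteq> K" and n1K: "mat 1 \<notin> K" using K by (auto simp: Afam_def)
  have "maximal_left_ideal ?T K"
    unfolding maximal_left_ideal_def
  proof (intro conjI allI impI)
    show "left_ideal ?T K" by fact
    show "K \<noteq> ?T" using n1K terwilliger_alg.one by blast
    fix L' assume L': "left_ideal ?T L'" "K \<subseteq> L'"
    show "L' = K \<or> L' = ?T"
    proof (cases "mat 1 \<in> L'")
      case True
      have "?T \<subseteq> L'"
      proof
        fix u :: "'f^'x^'x" assume "u \<in> ?T"
        then have "u ** mat 1 \<in> L'" using L' True unfolding left_ideal_def by blast
        then show "u \<in> L'" by simp
      qed
      then show ?thesis using L' by (auto simp: left_ideal_def)
    next
      case False
      then have "L' \<in> Afam" using L' LK by (auto simp: Afam_def)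
      then show ?thesis using Kmax L' by blast
    qed
  qed
  then have "M \<in> K" using M by (auto simp: jacobson_radical_def)
  then have tM: "t ** M \<in> K" using KI t by (auto simp: left_ideal_def)
  have "X \<in> L" unfolding L_def using terwilliger_alg.one[of R d y] by (auto intro!: exI[of _ "mat 1"])
  then have XK: "X \<in> K" using LK by blast
  have "0 - t ** M \<in> K" using KI tM unfolding left_ideal_def by blast
  then have "X - (0 - t ** M) \<in> K" using KI XK unfolding left_ideal_def by blast
  then show False using n1K unfolding X_def by simp
qed

section \<open>Scheme facts\<close>

lemma sch_parts:
  assumes "is_scheme R d"
  shows "(\<Union>i\<in>{0..d}. R i) = UNIV" "R 0 = {(b, b) | b. True}"
    "\<forall>i\<le>d. \<forall>j\<le>d. i \<noteq> j \<longrightarrow> R i \<inter> R j = {}"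
    "\<forall>c\<le>d. \<exists>c'\<le>d. R c' = {(f, e). (e, f) \<in> R c}"
    "\<forall>i\<le>d. \<forall>j\<le>d. \<forall>k\<le>d. \<forall>m n m' n'. (m, n) \<in> R k \<longrightarrow> (m', n') \<in> R k \<longrightarrow>
        card {l. (m, l) \<in> R i \<and> (l, n) \<in> R j} = card {l. (m', l) \<in> R i \<and> (l, n') \<in> R j}"
  using assms unfolding is_scheme_def
  apply -
  apply (elim conjE, assumption)+
  done

lemma sch_cover: "is_scheme R d \<Longrightarrow> \<exists>i\<le>d. p \<in> R i"
proof -
  assume "is_scheme R d"
  then have "p \<in> (\<Union>i\<in>{0..d}. R i)" using sch_parts(1) by (metis UNIV_I)
  then obtain i where "i \<in> {0..d}" "p \<in> R i" by (rule UN_E)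
  then show ?thesis by auto
qed

lemma sch_disj: "is_scheme R d \<Longrightarrow> i \<le> d \<Longrightarrow> j \<le> d \<Longrightarrow> p \<in> R i \<Longrightarrow> p \<in> R j \<Longrightarrow> i = j"
  using sch_parts(3) by blast

lemma sch_R0: "is_scheme R d \<Longrightarrow> p \<in> R 0 \<longleftrightarrow> fst p = snd p"
  using sch_parts(2)[of R d] by (cases p) auto

lemma sch_tr: "is_scheme R d \<Longrightarrow> c \<le> d \<Longrightarrow>
   transpose_index R d c \<le> d \<and> R (transpose_index R d c) = {(f, e). (e, f) \<in> R c}"
proof -
  assume "is_scheme R d" "c \<le> d"
  then have "\<exists>c'. c' \<le> d \<and> R c' = {(f, e). (e, f) \<in> R c}" using sch_parts(4) by blast
  then show ?thesis unfolding transpose_index_def by (rule someI_ex)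
qed

lemma sch_tr_mem: "is_scheme R d \<Longrightarrow> c \<le> d \<Longrightarrow> (u, w) \<in> R (transpose_index R d c) \<longleftrightarrow> (w, u) \<in> R c"
  using sch_tr by blast

lemma sch_count: "is_scheme R d \<Longrightarrow> i \<le> d \<Longrightarrow> j \<le> d \<Longrightarrow> k \<le> d \<Longrightarrow> (m, n) \<in> R k \<Longrightarrow> (m', n') \<in> R k \<Longrightarrow>
        card {l. (m, l) \<in> R i \<and> (l, n) \<in> R j} = card {l. (m', l) \<in> R i \<and> (l, n') \<in> R j}"
  using sch_parts(5)[of R d] by blast

lemma valency_card:
  assumes S: "is_scheme R d" and a: "a \<le> d"
  shows "valency R d a = card {l. (y, l) \<in> R a}"
proof -
  have ex: "\<exists>mn. mn \<in> R 0" using sch_R0[OF S, of "(y,y)"] by auto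
  obtain m n where mn: "(SOME mn. mn \<in> R 0) = (m, n)" by (cases "SOME mn. mn \<in> R 0") auto
  have "(m, n) \<in> R 0" using someI_ex[OF ex] mn by simp
  have ta: "transpose_index R d a \<le> d" using sch_tr[OF S a] by blast
  have "valency R d a = card {l. (m, l) \<in> R a \<and> (l, n) \<in> R (transpose_index R d a)}"
    unfolding valency_def intersection_number_def mn by simp
  also have "\<dots> = card {l. (y, l) \<in> R a \<and> (l, y) \<in> R (transpose_index R d a)}"
  proof -
    have "(y, y) \<in> R 0" using sch_R0[OF S, of "(y,y)"] by simp
    then show ?thesis using sch_count[OF S a ta le0 \<open>(m, n) \<in> R 0\<close> \<open>(y, y) \<in> R 0\<close>] by simp
  qed
  also have "\<dots> = card {l. (y, l) \<in> R a}"
    using sch_tr_mem[OF S a] by simp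
  finally show ?thesis .
qed

section \<open>Transpose closure\<close>

lemma T_transpose:
  fixes A :: "'f::field^'x::finite^'x" and R :: "nat \<Rightarrow> ('x \<times> 'x) set"
  assumes S: "is_scheme R d"
  shows "A \<in> terwilliger_alg R d y \<Longrightarrow> transpose A \<in> terwilliger_alg R d y"
proof (induction rule: terwilliger_alg.induct)
  case (gen_A a)
  have "transpose (adj_matrix R a) = (adj_matrix R (transpose_index R d a) :: 'f^'x^'x)"
    using sch_tr_mem[OF S gen_A] by (simp add: transpose_def adj_matrix_def vec_eq_iff)
  then show ?case using sch_tr[OF S gen_A] terwilliger_alg.gen_A by metis
next
  case (gen_E a)
  have "transpose (dual_idempotent R y a) = (dual_idempotent R y a :: 'f^'x^'x)"
    by (auto simp: transpose_def dual_idempotent_def vec_eq_iff)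
  then show ?case using terwilliger_alg.gen_E gen_E by metis
next
  case one
  then show ?case using terwilliger_alg.one by simp
next
  case zero
  have "transpose (0::'f^'x^'x) = 0" by (simp add: transpose_def vec_eq_iff)
  then show ?case using terwilliger_alg.zero by metis
next
  case (add A B)
  have "transpose (A + B) = transpose A + transpose B" by (simp add: transpose_def vec_eq_iff)
  then show ?case using terwilliger_alg.add add by metis
next
  case (smult A c)
  have "transpose (mat_smult c A) = mat_smult c (transpose A)" by (simp add: transpose_def mat_smult_def vec_eq_iff)
  then show ?case using terwilliger_alg.smult smult by metis
next
  case (mult A B)
  have "transpose (A ** B) = transpose B ** transpose A" by (rule matrix_transpose_mul)
  then show ?case using terwilliger_alg.mult[OF mult.IH(2) mult.IH(1)] by simp
qed


lemma E0_sandwich: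
  fixes W :: "'f::field^'x::finite^'x"
  assumes S: "is_scheme R d"
  shows "dual_idempotent R x 0 ** W ** dual_idempotent R x 0 = mat_smult (W $ x $ x) (dual_idempotent R x 0)"
proof -
  have E: "(dual_idempotent R x 0 :: 'f^'x^'x) = (\<chi> i j. if i = x \<and> j = x then 1 else 0)"
    using sch_R0[OF S] by (auto simp: dual_idempotent_def vec_eq_iff)
  have L: "\<And>W::'f^'x^'x. ((\<chi> i j. if i = x \<and> j = x then 1 else 0) ** W) = (\<chi> i j. if i = x then W$x$j else 0)"
    by (simp add: matrix_matrix_mult_def vec_eq_iff if_distrib if_distribR sum.delta cong: if_cong)
  have Rr: "\<And>W::'f^'x^'x. (W ** (\<chi> i j. if i = x \<and> j = x then 1 else 0)) = (\<chi> i j. if j = x then W$i$x else 0)"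
    by (simp add: matrix_matrix_mult_def vec_eq_iff if_distrib if_distribR sum.delta cong: if_cong)
  show ?thesis unfolding E L Rr
    by (simp add: mat_smult_def vec_eq_iff)
qed

lemma E0_axis:
  assumes S: "is_scheme R d"
  shows "(dual_idempotent R x 0 :: 'f::field^'x::finite^'x) *v axis x 1 = axis x 1"
proof -
  have E: "(dual_idempotent R x 0 :: 'f^'x^'x) = (\<chi> i j. if j = x \<and> i = x then 1 else 0)"
    using sch_R0[OF S] by (auto simp: dual_idempotent_def vec_eq_iff)
  have "\<And>i. ((\<chi> i j. if j = x \<and> i = x then 1 else 0) *v (axis x 1 :: 'f^'x)) $ i = axis x 1 $ i"
  proof -
    fix i
    have "((\<chi> i j. if j = x \<and> i = x then 1 else 0) *v (axis x 1 :: 'f^'x)) $ i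
        = (\<Sum>j\<in>UNIV. if j = x then (if i = x then 1 else 0) else (0::'f))"
      unfolding matrix_vector_mult_def axis_def vec_lambda_beta by (intro sum.cong) auto
    also have "\<dots> = axis x 1 $ i" by (simp add: axis_def)
    finally show "?thesis i" .
  qed
  then show ?thesis unfolding E by (simp add: vec_eq_iff)
qed

lemma mat_smult_mult: "mat_smult c (A::'f::field^'x::finite^'x) ** B = mat_smult c (A ** B)"
  unfolding mat_smult_def matrix_matrix_mult_def by (simp add: vec_eq_iff sum_distrib_left mult_ac)

lemma mult_mat_smult: "(A::'f::field^'x::finite^'x) ** mat_smult c B = mat_smult c (A ** B)"
  unfolding mat_smult_def matrix_matrix_mult_def by (simp add: vec_eq_iff sum_distrib_left mult_ac)

lemma mat_smult_smult: "mat_smult c (mat_smult e (A::'f::field^'x::finite^'x)) = mat_smult (c * e) A"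
  by (simp add: mat_smult_def vec_eq_iff mult.assoc)

lemma mat_smult_one: "mat_smult 1 (A::'f::field^'x::finite^'x) = A"
  by (simp add: mat_smult_def vec_eq_iff)

lemma jac_zero:
  fixes M P Q :: "'f::field^'x::finite^'x"
  assumes S: "is_scheme R d"
    and M: "M \<in> jacobson_radical (terwilliger_alg R d x)"
    and P: "P \<in> terwilliger_alg R d x" and Q: "Q \<in> terwilliger_alg R d x"
    and Pe: "P *v axis x 1 \<noteq> 0"
  shows "((Q ** M) ** P) $ x $ x = 0"
proof (rule ccontr)
  let ?T = "terwilliger_alg R d x"
  let ?E = "dual_idempotent R x 0 :: 'f^'x^'x"
  define \<alpha> where "\<alpha> = ((Q ** M) ** P) $ x $ x"
  assume "\<alpha> \<noteq> 0"
  define t where "t = mat_smult (inverse \<alpha>) (P ** ?E ** Q)"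
  have tT: "t \<in> ?T" unfolding t_def
    by (intro terwilliger_alg.smult terwilliger_alg.mult P Q terwilliger_alg.gen_E) simp
  obtain s where s: "s ** (mat 1 - t ** M) = mat 1" using jac_inv[OF M tT] by blast
  define v where "v = P *v axis x 1"
  have v2: "v = (P ** ?E) *v axis x 1" unfolding v_def
    by (simp add: E0_axis[OF S] matrix_vector_mul_assoc[symmetric])
  have "t ** M ** (P ** ?E) = mat_smult (inverse \<alpha>) (P ** (?E ** (Q ** M ** P) ** ?E))"
    unfolding t_def by (simp add: mat_smult_mult matrix_mul_assoc)
  also have "\<dots> = P ** ?E"
    unfolding E0_sandwich[OF S] mult_mat_smult mat_smult_smult
    using \<open>\<alpha> \<noteq> 0\<close> by (simp add: \<alpha>_def mat_smult_one)
  finally have key: "t ** M ** (P ** ?E) = P ** ?E" .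
  have "(mat 1 - t ** M) *v v = v - (t ** M ** (P ** ?E)) *v axis x 1"
    unfolding v2 by (simp add: mat_diff_rdistrib matrix_vector_mult_diff_rdistrib matrix_vector_mul_assoc[symmetric])
  also have "\<dots> = 0" unfolding key v2 by simp
  finally have z: "(mat 1 - t ** M) *v v = 0" .
  have "v = (s ** (mat 1 - t ** M)) *v v" using s by simp
  also have "\<dots> = s *v ((mat 1 - t ** M) *v v)" by (simp add: matrix_vector_mul_assoc)
  also have "\<dots> = 0" using z by simp
  finally show False using Pe v_def by simp
qed


section \<open>Constancy on classes\<close>

definition cst :: "(nat \<Rightarrow> ('x::finite \<times> 'x) set) \<Rightarrow> nat \<Rightarrow> 'x \<Rightarrow> 'f::field^'x \<Rightarrow> bool" where
  "cst R d x v \<longleftrightarrow> (\<forall>i\<le>d. \<forall>u w. (x, u) \<in> R i \<longrightarrow> (x, w) \<in> R i \<longrightarrow> v $ u = v $ w)"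

lemma sum_if_const: "(\<Sum>l\<in>(UNIV::'x::finite set). if P l then c else 0) = of_nat (card {l. P l}) * c"
proof -
  have "(\<Sum>l\<in>(UNIV::'x set). if P l then c else 0) = (\<Sum>l\<in>{l\<in>UNIV. P l}. c)"
    by (rule sum.inter_filter[symmetric]) simp
  then show ?thesis by simp
qed

lemma cst_repr:
  fixes v :: "'f::field^'x::finite"
  assumes S: "is_scheme R d" and c: "cst R d x v"
  shows "v $ w = (\<Sum>i\<le>d. if (x, w) \<in> R i then v $ (SOME l. (x, l) \<in> R i) else 0)"
proof -
  obtain i0 where i0: "i0 \<le> d" "(x, w) \<in> R i0" using sch_cover[OF S] by blast
  have "(\<Sum>i\<le>d. if (x, w) \<in> R i then v $ (SOME l. (x, l) \<in> R i) else 0)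
      = (\<Sum>i\<le>d. if i = i0 then v $ (SOME l. (x, l) \<in> R i) else 0)"
  proof (rule sum.cong[OF refl])
    fix i assume "i \<in> {..d}"
    then have "i \<le> d" by simp
    then have "(x, w) \<in> R i \<longleftrightarrow> i = i0" using sch_disj[OF S _ i0(1) _ i0(2)] i0(2) by blast
    then show "(if (x, w) \<in> R i then v $ (SOME l. (x, l) \<in> R i) else 0) = (if i = i0 then v $ (SOME l. (x, l) \<in> R i) else 0)"
      by simp
  qed
  also have "\<dots> = v $ (SOME l. (x, l) \<in> R i0)" using i0 by simp
  also have "\<dots> = v $ w"
  proof -
    have "(x, SOME l. (x, l) \<in> R i0) \<in> R i0" using i0(2) by (rule someI)
    then show ?thesis using c i0 unfolding cst_def by blast
  qed
  finally show ?thesis by (rule sym)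
qed

lemma cst_A:
  fixes v :: "'f::field^'x::finite"
  assumes S: "is_scheme R d" and j: "j \<le> d" and c: "cst R d x v"
  shows "cst R d x (v v* adj_matrix R j)"
proof -
  define f where "f i = v $ (SOME l. (x, l) \<in> R i)" for i
  have form: "(v v* adj_matrix R j) $ y = (\<Sum>i\<le>d. of_nat (card {l. (x, l) \<in> R i \<and> (l, y) \<in> R j}) * f i)" for y
  proof -
    have "(v v* adj_matrix R j) $ y = (\<Sum>l\<in>UNIV. v $ l * (if (l, y) \<in> R j then 1 else 0))"
      by (simp add: vector_matrix_mult_def adj_matrix_def)
    also have "\<dots> = (\<Sum>l\<in>UNIV. \<Sum>i\<le>d. if (x, l) \<in> R i \<and> (l, y) \<in> R j then f i else 0)"
    proof (rule sum.cong[OF refl])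
      fix l
      have "v $ l * (if (l, y) \<in> R j then 1 else 0) = (\<Sum>i\<le>d. if (x, l) \<in> R i then f i else 0) * (if (l, y) \<in> R j then 1 else 0)"
        using cst_repr[OF S c, of l] unfolding f_def by simp
      also have "\<dots> = (\<Sum>i\<le>d. (if (x, l) \<in> R i then f i else 0) * (if (l, y) \<in> R j then 1 else 0))"
        by (rule sum_distrib_right)
      also have "\<dots> = (\<Sum>i\<le>d. if (x, l) \<in> R i \<and> (l, y) \<in> R j then f i else 0)"
        by (rule sum.cong[OF refl]) simp
      finally show "v $ l * (if (l, y) \<in> R j then 1 else 0) = (\<Sum>i\<le>d. if (x, l) \<in> R i \<and> (l, y) \<in> R j then f i else 0)" .
    qed
    also have "\<dots> = (\<Sum>i\<le>d. \<Sum>l\<in>UNIV. if (x, l) \<in> R i \<and> (l, y) \<in> R j then f i else 0)"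
      by (rule sum.swap)
    also have "\<dots> = (\<Sum>i\<le>d. of_nat (card {l. (x, l) \<in> R i \<and> (l, y) \<in> R j}) * f i)"
      by (simp only: sum_if_const)
    finally show ?thesis .
  qed
  show ?thesis unfolding cst_def
  proof (intro allI impI)
    fix k u w assume k: "k \<le> d" and u: "(x, u) \<in> R k" and w: "(x, w) \<in> R k"
    have "\<And>i. i \<le> d \<Longrightarrow> card {l. (x, l) \<in> R i \<and> (l, u) \<in> R j} = card {l. (x, l) \<in> R i \<and> (l, w) \<in> R j}"
      using sch_count[OF S _ j k u w] by blast
    then show "(v v* adj_matrix R j) $ u = (v v* adj_matrix R j) $ w"
      unfolding form by (intro sum.cong) auto
  qed
qed

lemma cst_E:
  fixes v :: "'f::field^'x::finite"
  assumes S: "is_scheme R d" and j: "j \<le> d" and c: "cst R d x v"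
  shows "cst R d x (v v* dual_idempotent R x j)"
proof -
  have form: "(v v* dual_idempotent R x j) $ y = (if (x, y) \<in> R j then v $ y else 0)" for y
  proof -
    have "(v v* dual_idempotent R x j) $ y = (\<Sum>l\<in>UNIV. v $ l * (if l = y \<and> (x, l) \<in> R j then 1 else 0))"
      by (simp add: vector_matrix_mult_def dual_idempotent_def)
    also have "\<dots> = (\<Sum>l\<in>UNIV. if l = y then (if (x, y) \<in> R j then v $ y else 0) else 0)"
      by (rule sum.cong[OF refl]) auto
    finally show ?thesis by simp
  qed
  show ?thesis unfolding cst_def
  proof (intro allI impI)
    fix k u w assume k: "k \<le> d" and u: "(x, u) \<in> R k" and w: "(x, w) \<in> R k"
    have "(x, u) \<in> R j \<longleftrightarrow> (x, w) \<in> R j" using sch_disj[OF S j k] u w by blast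
    moreover have "v $ u = v $ w" using c k u w unfolding cst_def by blast
    ultimately show "(v v* dual_idempotent R x j) $ u = (v v* dual_idempotent R x j) $ w"
      unfolding form by simp
  qed
qed

lemma cst_T:
  fixes A :: "'f::field^'x::finite^'x" and R :: "nat \<Rightarrow> ('x \<times> 'x) set"
  assumes S: "is_scheme R d"
  shows "A \<in> terwilliger_alg R d x \<Longrightarrow> \<forall>v. cst R d x v \<longrightarrow> cst R d x (v v* A)"
proof (induction rule: terwilliger_alg.induct)
  case (gen_A a)
  then show ?case using cst_A[OF S] by blast
next
  case (gen_E a)
  then show ?case using cst_E[OF S] by blast
next
  case one
  show ?case by simp
next
  case zero
  have "\<And>v::'f^'x. v v* (0::'f^'x^'x) = 0" by (simp add: vector_matrix_mult_def vec_eq_iff)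
  moreover have "cst R d x (0::'f^'x)" unfolding cst_def by simp
  ultimately show ?case by simp
next
  case (add A B)
  show ?case
  proof (intro allI impI)
    fix v :: "'f^'x" assume c: "cst R d x v"
    have a: "cst R d x (v v* A)" and b: "cst R d x (v v* B)" using add.IH c by blast+
    have e: "v v* (A + B) = v v* A + v v* B" by (rule vector_matrix_mult_add_rdistrib)
    show "cst R d x (v v* (A + B))" unfolding e cst_def
    proof (intro allI impI)
      fix k u w assume "k \<le> d" "(x, u) \<in> R k" "(x, w) \<in> R k"
      then have "(v v* A) $ u = (v v* A) $ w" "(v v* B) $ u = (v v* B) $ w"
        using a b unfolding cst_def by blast+
      then show "(v v* A + v v* B) $ u = (v v* A + v v* B) $ w" by simp
    qed
  qed
next
  case (smult A c)
  show ?case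
  proof (intro allI impI)
    fix v :: "'f^'x" assume cv: "cst R d x v"
    have a: "cst R d x (v v* A)" using smult.IH cv by blast
    have e: "v v* mat_smult c A = c *s (v v* A)"
      by (simp add: vector_matrix_mult_def mat_smult_def vec_eq_iff sum_distrib_left mult_ac)
    show "cst R d x (v v* mat_smult c A)" unfolding e cst_def
    proof (intro allI impI)
      fix k u w assume "k \<le> d" "(x, u) \<in> R k" "(x, w) \<in> R k"
      then have "(v v* A) $ u = (v v* A) $ w"
        using a unfolding cst_def by blast
      then show "(c *s (v v* A)) $ u = (c *s (v v* A)) $ w" by simp
    qed
  qed
next
  case (mult A B)
  show ?case
  proof (intro allI impI)
    fix v :: "'f^'x" assume cv: "cst R d x v"
    have "cst R d x ((v v* A) v* B)" using mult.IH cv by blast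
    then show "cst R d x (v v* (A ** B))" by (simp add: vector_matrix_mul_assoc)
  qed
qed

lemma axis_vm: "(axis x 1 v* (S::'f::field^'x::finite^'x)) $ j = S $ x $ j"
proof -
  have "(axis x 1 v* S) $ j = (\<Sum>l\<in>UNIV. (if l = x then 1 else 0) * S $ l $ j)"
    by (simp add: vector_matrix_mult_def axis_def mult.commute)
  also have "\<dots> = (\<Sum>l\<in>UNIV. if l = x then S $ x $ j else 0)"
    by (rule sum.cong[OF refl]) auto
  finally show ?thesis by simp
qed

lemma axis_mv: "((S::'f::field^'x::finite^'x) *v axis x 1) $ j = S $ j $ x"
proof -
  have "(S *v axis x 1) $ j = (\<Sum>l\<in>UNIV. S $ j $ l * (if l = x then 1 else 0))"
    by (simp add: matrix_vector_mult_def axis_def)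
  also have "\<dots> = (\<Sum>l\<in>UNIV. if l = x then S $ j $ x else 0)"
    by (rule sum.cong[OF refl]) auto
  finally show ?thesis by simp
qed

lemma row_const:
  fixes S :: "'f::field^'x::finite^'x"
  assumes Sc: "is_scheme R d" and ST: "S \<in> terwilliger_alg R d x"
    and i: "i \<le> d" and u: "(x, u) \<in> R i" and w: "(x, w) \<in> R i"
  shows "S $ x $ u = S $ x $ w"
proof -
  have "cst R d x (axis x 1 :: 'f^'x)" unfolding cst_def
  proof (intro allI impI)
    fix k u w assume k: "k \<le> d" and u: "(x, u) \<in> R k" and w: "(x, w) \<in> R k"
    have x0: "(x, x) \<in> R 0" using sch_R0[OF Sc] by simp
    show "(axis x 1 :: 'f^'x) $ u = axis x 1 $ w"
    proof (cases "u = x \<or> w = x")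
      case True
      then have "k = 0" using sch_disj[OF Sc k le0] x0 u w by blast
      then have "u = x" "w = x" using u w sch_R0[OF Sc] by auto
      then show ?thesis by simp
    next
      case False
      then show ?thesis by (simp add: axis_def)
    qed
  qed
  then have "cst R d x (axis x 1 v* S)" using cst_T[OF Sc ST] by blast
  then show ?thesis using i u w unfolding cst_def axis_vm by blast
qed

lemma col_const:
  fixes S :: "'f::field^'x::finite^'x"
  assumes Sc: "is_scheme R d" and ST: "S \<in> terwilliger_alg R d x"
    and i: "i \<le> d" and u: "(x, u) \<in> R i" and w: "(x, w) \<in> R i"
  shows "S $ u $ x = S $ w $ x"
  using row_const[OF Sc T_transpose[OF Sc ST] i u w] by (simp add: transpose_def)


lemma class_sum:
  fixes g :: "'x::finite \<Rightarrow> 'f::field"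
  assumes "\<And>l. (x, l) \<in> R i \<Longrightarrow> g l = g c"
  shows "(\<Sum>l\<in>UNIV. (if (x, l) \<in> R i then 1 else 0) * g l) = of_nat (card {l. (x, l) \<in> R i}) * g c"
proof -
  have "(\<Sum>l\<in>UNIV. (if (x, l) \<in> R i then 1 else 0) * g l) = (\<Sum>l\<in>UNIV. if (x, l) \<in> R i then g c else 0)"
    using assms by (intro sum.cong) auto
  then show ?thesis by (simp only: sum_if_const)
qed

lemma single_sum:
  fixes g :: "'x::finite \<Rightarrow> 'f::field"
  assumes "{l. (x, l) \<in> R a} = {z}"
  shows "(\<Sum>l\<in>UNIV. (if (x, l) \<in> R a then 1 else 0) * g l) = g z"
proof -
  have "\<And>l. (x, l) \<in> R a \<longleftrightarrow> l = z" using assms by blast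
  then have "(\<Sum>l\<in>UNIV. (if (x, l) \<in> R a then 1 else 0) * g l) = (\<Sum>l\<in>UNIV. if l = z then g z else 0)"
    by (intro sum.cong) auto
  then show ?thesis by simp
qed

lemma card_nz:
  assumes S: "is_scheme R d" and pv: "p'_valenced CHAR('f::field) R d" and i: "i \<le> d"
  shows "(of_nat (card {l. (x, l) \<in> R i}) :: 'f) \<noteq> 0"
proof -
  have "\<not> CHAR('f) dvd valency R d i" using pv i unfolding p'_valenced_def by blast
  then show ?thesis using valency_card[OF S i, of x] by (simp add: of_nat_eq_0_iff_char_dvd)
qed

lemma E_left: "(dual_idempotent R x a ** (M::'f::field^'x::finite^'x)) $ r $ c = (if (x, r) \<in> R a then M $ r $ c else 0)"
proof -
  have "(dual_idempotent R x a ** M) $ r $ c = (\<Sum>k\<in>UNIV. (if r = k \<and> (x, r) \<in> R a then 1 else 0) * M $ k $ c)"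
    by (simp add: matrix_matrix_mult_def dual_idempotent_def)
  also have "\<dots> = (\<Sum>k\<in>UNIV. if k = r then (if (x, r) \<in> R a then M $ r $ c else 0) else 0)"
    by (rule sum.cong[OF refl]) auto
  finally show ?thesis by simp
qed

lemma E_right: "((M::'f::field^'x::finite^'x) ** dual_idempotent R x a) $ r $ c = (if (x, c) \<in> R a then M $ r $ c else 0)"
proof -
  have "(M ** dual_idempotent R x a) $ r $ c = (\<Sum>k\<in>UNIV. M $ r $ k * (if k = c \<and> (x, k) \<in> R a then 1 else 0))"
    by (simp add: matrix_matrix_mult_def dual_idempotent_def)
  also have "\<dots> = (\<Sum>k\<in>UNIV. if k = c then (if (x, c) \<in> R a then M $ r $ c else 0) else 0)"
    by (rule sum.cong[OF refl]) auto
  finally show ?thesis by simp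
qed

lemma nonzero_entry: "(A::'f::field^'x::finite^'x) \<noteq> 0 \<Longrightarrow> \<exists>r c. A $ r $ c \<noteq> 0"
  by (metis vec_eq_iff zero_index)

theorem lemma5p1:
  fixes R :: "nat \<Rightarrow> ('x::finite \<times> 'x) set" and d :: nat and x :: 'x
    and M :: "'f::field^'x^'x"
  assumes "is_scheme R d"
    and "p'_valenced CHAR('f) R d"
    and "M \<in> jacobson_radical (terwilliger_alg R d x)"
  shows "\<not> (\<exists>a\<le>d. valency R d a = 1 \<and> dual_idempotent R x a ** M \<noteq> 0) \<and>
         \<not> (\<exists>a\<le>d. valency R d a = 1 \<and> M ** dual_idempotent R x a \<noteq> 0)"
proof -
  note S = assms(1) and pv = assms(2) and MJ = assms(3)
  let ?T = "terwilliger_alg R d x"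
  have MT: "M \<in> ?T" using MJ by (simp add: jacobson_radical_def)
  have sing: "\<exists>z. {l. (x, l) \<in> R a} = {z}" if a: "a \<le> d" "valency R d a = 1" for a
    using valency_card[OF S a(1), of x] a(2) by (metis card_1_singletonE)
  have part1: False if a: "a \<le> d" "valency R d a = 1" "dual_idempotent R x a ** M \<noteq> 0" for a
  proof -
    obtain z where z: "{l. (x, l) \<in> R a} = {z}" using sing a by blast
    obtain r c where rc: "(dual_idempotent R x a ** M) $ r $ c \<noteq> 0" using nonzero_entry a(3) by blast
    note E_left[of R x a M r c]
    then have "(x, r) \<in> R a" "M $ r $ c \<noteq> 0" using rc by (auto split: if_splits)
    then have rz: "r = z" using z by blast
    define N where "N = adj_matrix R a ** M"
    have NT: "N \<in> ?T" unfolding N_def using a(1) MT by (intro terwilliger_alg.mult terwilliger_alg.gen_A)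
    have "N $ x $ c = (\<Sum>l\<in>UNIV. (if (x, l) \<in> R a then 1 else 0) * M $ l $ c)"
      by (simp add: N_def matrix_matrix_mult_def adj_matrix_def)
    also have "\<dots> = M $ z $ c" using z by (rule single_sum)
    finally have Nc: "N $ x $ c \<noteq> 0" using \<open>M $ r $ c \<noteq> 0\<close> rz by simp
    obtain i where i: "i \<le> d" "(x, c) \<in> R i" using sch_cover[OF S] by blast
    define i' where "i' = transpose_index R d i"
    have i'd: "i' \<le> d" using sch_tr[OF S i(1)] i'_def by blast
    have i'm: "\<And>u w. (u, w) \<in> R i' \<longleftrightarrow> (w, u) \<in> R i" using sch_tr_mem[OF S i(1)] i'_def by blast
    define P where "P = (adj_matrix R i' :: 'f^'x^'x)"
    have PT: "P \<in> ?T" unfolding P_def using i'd by (rule terwilliger_alg.gen_A)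
    have "(P *v axis x 1) $ c = P $ c $ x" by (rule axis_mv)
    also have "\<dots> = 1" using i(2) i'm by (simp add: P_def adj_matrix_def)
    finally have Pe: "P *v axis x 1 \<noteq> 0" by (metis one_neq_zero zero_index)
    have "((adj_matrix R a ** M) ** P) $ x $ x = (\<Sum>l\<in>UNIV. (if (x, l) \<in> R i then 1 else 0) * N $ x $ l)"
    proof -
      have "((adj_matrix R a ** M) ** P) $ x $ x = (\<Sum>l\<in>UNIV. N $ x $ l * P $ l $ x)"
        unfolding N_def[symmetric] by (simp add: matrix_matrix_mult_def)
      also have "\<dots> = (\<Sum>l\<in>UNIV. (if (x, l) \<in> R i then 1 else 0) * N $ x $ l)"
        by (rule sum.cong[OF refl]) (simp add: P_def adj_matrix_def i'm)
      finally show ?thesis .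
    qed
    also have "\<dots> = of_nat (card {l. (x, l) \<in> R i}) * N $ x $ c"
      by (rule class_sum) (rule row_const[OF S NT i(1)], simp_all add: i(2))
    also have "\<dots> \<noteq> 0" using Nc card_nz[OF S pv i(1)] by simp
    finally show False using jac_zero[OF S MJ PT terwilliger_alg.gen_A[OF a(1)] Pe] by simp
  qed
  have part2: False if a: "a \<le> d" "valency R d a = 1" "M ** dual_idempotent R x a \<noteq> 0" for a
  proof -
    obtain z where z: "{l. (x, l) \<in> R a} = {z}" using sing a by blast
    obtain r c where rc: "(M ** dual_idempotent R x a) $ r $ c \<noteq> 0" using nonzero_entry a(3) by blast
    note E_right[of M R x a r c]
    then have "(x, c) \<in> R a" "M $ r $ c \<noteq> 0" using rc by (auto split: if_splits)
    then have cz: "c = z" using z by blast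
    define a' where "a' = transpose_index R d a"
    have a'd: "a' \<le> d" using sch_tr[OF S a(1)] a'_def by blast
    have a'm: "\<And>u w. (u, w) \<in> R a' \<longleftrightarrow> (w, u) \<in> R a" using sch_tr_mem[OF S a(1)] a'_def by blast
    define P where "P = (adj_matrix R a' :: 'f^'x^'x)"
    have PT: "P \<in> ?T" unfolding P_def using a'd by (rule terwilliger_alg.gen_A)
    define N where "N = M ** P"
    have NT: "N \<in> ?T" unfolding N_def using PT MT by (intro terwilliger_alg.mult)
    have "N $ r $ x = (\<Sum>l\<in>UNIV. (if (x, l) \<in> R a then 1 else 0) * M $ r $ l)"
      by (simp add: N_def P_def matrix_matrix_mult_def adj_matrix_def a'm mult.commute)
    also have "\<dots> = M $ r $ z" using z by (rule single_sum)
    finally have Nr: "N $ r $ x \<noteq> 0" using \<open>M $ r $ c \<noteq> 0\<close> cz by simp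
    obtain i where i: "i \<le> d" "(x, r) \<in> R i" using sch_cover[OF S] by blast
    have "(P *v axis x 1) $ z = P $ z $ x" by (rule axis_mv)
    also have "\<dots> = 1" using z a'm by (auto simp add: P_def adj_matrix_def)
    finally have Pe: "P *v axis x 1 \<noteq> 0" by (metis one_neq_zero zero_index)
    have "((adj_matrix R i ** M) ** P) $ x $ x = (\<Sum>l\<in>UNIV. (if (x, l) \<in> R i then 1 else 0) * N $ l $ x)"
      by (simp add: N_def matrix_mul_assoc[symmetric]) (simp add: matrix_matrix_mult_def adj_matrix_def)
    also have "\<dots> = of_nat (card {l. (x, l) \<in> R i}) * N $ r $ x"
      by (rule class_sum) (rule col_const[OF S NT i(1)], simp_all add: i(2))
    also have "\<dots> \<noteq> 0" using Nr card_nz[OF S pv i(1)] by simp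
    finally show False using jac_zero[OF S MJ PT terwilliger_alg.gen_A[OF i(1)] Pe] by simp
  qed
  show ?thesis using part1 part2 by blast
qed

end
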